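(* Let $D$ be an oriented graph and $D'$ a subdigraph of $D$. If $S$ is a minimum hull set of $D$ in the two-path convexity, then $|S\cap V(D')|\leq \overrightarrow{hn}_{P_3}(D')$.
   Context: An oriented graph is an orientation of a finite simple graph. The two-path interval function on an oriented graph $D$ is $I_{P_3}(u,v)=\{u,v\}$ together with all vertices $w$ with $(u,w),(w,v)\in A(D)$ or $(v,w),(w,u)\in A(D)$. For $S\subseteq V(D)$, $I_{P_3}(S)=\bigcup_{u,v\in S}I_{P_3}(u,v)$; $C$ is convex if $I_{P_3}(C)=C$; the convex hull of $S$ is the smallest convex set containing $S$; a hull set is a set whose convex hull is $V(D)$, and $\overrightarrow{hn}_{P_3}(D)$ is the minimum size of a hull set (computed in $D'$ itself for $\overrightarrow{hn}_{P_3}(D')$). *)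

theory Defs
  imports Main
begin

definition oriented_graph :: "'a set \<Rightarrow> ('a \<times> 'a) set \<Rightarrow> bool" where
  "oriented_graph V A \<longleftrightarrow> finite V \<and> A \<subseteq> V \<times> V \<and>
     (\<forall>u v. (u, v) \<in> A \<longrightarrow> u \<noteq> v \<and> (v, u) \<notin> A)"

definition subdigraph :: "'a set \<Rightarrow> ('a \<times> 'a) set \<Rightarrow> 'a set \<Rightarrow> ('a \<times> 'a) set \<Rightarrow> bool" where
  "subdigraph V' A' V A \<longleftrightarrow> V' \<subseteq> V \<and> A' \<subseteq> A \<and> A' \<subseteq> V' \<times> V'"

definition P3_interval :: "('a \<times> 'a) set \<Rightarrow> 'a \<Rightarrow> 'a \<Rightarrow> 'a set" where
  "P3_interval A u v = {u, v} \<union>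
     {w. ((u, w) \<in> A \<and> (w, v) \<in> A) \<or> ((v, w) \<in> A \<and> (w, u) \<in> A)}"

definition P3_interval_set :: "('a \<times> 'a) set \<Rightarrow> 'a set \<Rightarrow> 'a set" where
  "P3_interval_set A S = (\<Union>u\<in>S. \<Union>v\<in>S. P3_interval A u v)"

definition P3_convex :: "('a \<times> 'a) set \<Rightarrow> 'a set \<Rightarrow> bool" where
  "P3_convex A C \<longleftrightarrow> P3_interval_set A C = C"

definition P3_hull :: "'a set \<Rightarrow> ('a \<times> 'a) set \<Rightarrow> 'a set \<Rightarrow> 'a set" where
  "P3_hull V A S = \<Inter> {C. S \<subseteq> C \<and> C \<subseteq> V \<and> P3_convex A C}"

definition P3_hull_set :: "'a set \<Rightarrow> ('a \<times> 'a) set \<Rightarrow> 'a set \<Rightarrow> bool" where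
  "P3_hull_set V A S \<longleftrightarrow> S \<subseteq> V \<and> P3_hull V A S = V"

definition P3_hull_number :: "'a set \<Rightarrow> ('a \<times> 'a) set \<Rightarrow> nat" where
  "P3_hull_number V A = Min {card S | S. P3_hull_set V A S}"

definition P3_minimum_hull_set :: "'a set \<Rightarrow> ('a \<times> 'a) set \<Rightarrow> 'a set \<Rightarrow> bool" where
  "P3_minimum_hull_set V A S \<longleftrightarrow> P3_hull_set V A S \<and> card S = P3_hull_number V A"

end

theory Submission
  imports Defs
begin

lemma interval_set_sup: "S \<subseteq> P3_interval_set A S"
  unfolding P3_interval_set_def P3_interval_def by blast

lemma convex_restrict:
  assumes "P3_convex A C" "A' \<subseteq> A" "A' \<subseteq> V' \<times> V'"
  shows "P3_convex A' (C \<inter> V')"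
proof -
  have "P3_interval_set A' (C \<inter> V') \<subseteq> C \<inter> V'"
  proof
    fix w assume "w \<in> P3_interval_set A' (C \<inter> V')"
    then obtain u v where uv: "u \<in> C \<inter> V'" "v \<in> C \<inter> V'" "w \<in> P3_interval A' u v"
      unfolding P3_interval_set_def by blast
    then have "w \<in> P3_interval A u v" "w \<in> V'"
      using assms(2,3) unfolding P3_interval_def by blast+
    moreover have "P3_interval A u v \<subseteq> C"
      using assms(1) uv unfolding P3_convex_def P3_interval_set_def by blast
    ultimately show "w \<in> C \<inter> V'" by blast
  qed
  then show ?thesis using interval_set_sup[of "C \<inter> V'" A'] unfolding P3_convex_def by blast
qed

lemma whole_convex:
  assumes "A \<subseteq> V \<times> V"
  shows "P3_convex A V"
proof -
  have "P3_interval_set A V \<subseteq> V"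
    using assms unfolding P3_interval_set_def P3_interval_def by blast
  then show ?thesis using interval_set_sup[of V A] unfolding P3_convex_def by blast
qed

theorem proposition8:
  fixes V V' :: "'a set" and A A' :: "('a \<times> 'a) set" and S :: "'a set"
  assumes "oriented_graph V A"
    and "subdigraph V' A' V A"
    and "P3_minimum_hull_set V A S"
  shows "card (S \<inter> V') \<le> P3_hull_number V' A'"
proof -
  have finV: "finite V" and AV: "A \<subseteq> V \<times> V" using assms(1) unfolding oriented_graph_def by auto
  have V'V: "V' \<subseteq> V" and A'A: "A' \<subseteq> A" and A'V': "A' \<subseteq> V' \<times> V'"
    using assms(2) unfolding subdigraph_def by auto
  have finV': "finite V'" using finV V'V finite_subset by blast
  have SV: "S \<subseteq> V" and hS: "P3_hull V A S = V" and cS: "card S = P3_hull_number V A"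
    using assms(3) unfolding P3_minimum_hull_set_def P3_hull_set_def by auto
  have finS: "finite S" using SV finV finite_subset by blast
  have "P3_hull V' A' V' = V'"
    using whole_convex[OF A'V'] unfolding P3_hull_def by blast
  then have V'hull: "P3_hull_set V' A' V'" unfolding P3_hull_set_def by blast
  have fin_cards: "finite {card T | T. P3_hull_set V' A' T}"
  proof -
    have "{card T | T. P3_hull_set V' A' T} \<subseteq> card ` Pow V'"
      unfolding P3_hull_set_def by blast
    then show ?thesis using finV' finite_subset by blast
  qed
  have "P3_hull_number V' A' \<in> {card T | T. P3_hull_set V' A' T}"
    unfolding P3_hull_number_def
    apply (rule Min_in[OF fin_cards]) using V'hull by blast
  then have "\<exists>T. P3_hull_number V' A' = card T \<and> P3_hull_set V' A' T" by (simp only: mem_Collect_eq)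
  then obtain T where cT0: "P3_hull_number V' A' = card T" and hT: "P3_hull_set V' A' T" by blast
  have cT: "card T = P3_hull_number V' A'" using cT0 by simp
  have TV': "T \<subseteq> V'" and hullT: "P3_hull V' A' T = V'" using hT unfolding P3_hull_set_def by auto
  define S' where "S' = (S - V') \<union> T"
  have S'V: "S' \<subseteq> V" using SV TV' V'V unfolding S'_def by blast
  have "P3_hull V A S' = V"
  proof
    show "P3_hull V A S' \<subseteq> V"
      using whole_convex[OF AV] S'V unfolding P3_hull_def by blast
  next
    have "V \<subseteq> C" if C: "S' \<subseteq> C" "C \<subseteq> V" "P3_convex A C" for C
    proof -
      have "P3_convex A' (C \<inter> V')" using convex_restrict[OF C(3) A'A A'V'] .
      moreover have "T \<subseteq> C \<inter> V'" "C \<inter> V' \<subseteq> V'" using C(1) TV' unfolding S'_def by auto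
      ultimately have "V' \<subseteq> C \<inter> V'" using hullT unfolding P3_hull_def by blast
      then have "S \<subseteq> C" using C(1) unfolding S'_def by blast
      then show ?thesis using hS C unfolding P3_hull_def by blast
    qed
    then show "V \<subseteq> P3_hull V A S'" unfolding P3_hull_def by blast
  qed
  then have S'hull: "P3_hull_set V A S'" using S'V unfolding P3_hull_set_def by blast
  have fin_cards2: "finite {card T | T. P3_hull_set V A T}"
  proof -
    have "{card T | T. P3_hull_set V A T} \<subseteq> card ` Pow V"
      unfolding P3_hull_set_def by blast
    then show ?thesis using finV finite_subset by blast
  qed
  have "card S \<le> card S'"
    unfolding cS P3_hull_number_def
    apply (rule Min_le[OF fin_cards2]) using S'hull by blast
  also have "card S' \<le> card (S - V') + card T"
    unfolding S'_def by (rule card_Un_le)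
  finally have "card S \<le> card (S - V') + card T" .
  moreover have "card S = card (S - V') + card (S \<inter> V')"
  proof -
    have "S = (S - V') \<union> (S \<inter> V')" by blast
    then have "card S = card ((S - V') \<union> (S \<inter> V'))" by simp
    also have "\<dots> = card (S - V') + card (S \<inter> V')"
      by (rule card_Un_disjoint) (use finS in auto)
    finally show ?thesis .
  qed
  ultimately show ?thesis using cT by linarith
qed

end
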